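(* Let $P\subseteq \mathbb{P}^{n-1}$ be a full-dimensional polytope, let $1\le k\le n$, and let $\mathrm{C}_P^k=(C_{G_1},\ldots,C_{G_f})$ be the vector of Chow forms of $P$, where $f$ is the number of $(n-k-1)$-dimensional faces of $P$. Then for every $V\in \mathrm{Gr}(k,n)$ the vector $\mathrm{C}_P^k(V)$ is not the zero vector, and its evaluations at different representatives of $V$ differ by a nonzero scalar multiple; hence $\mathrm{C}_P^k(V)$ is a well-defined point of $\mathbb{P}^{f-1}$.
   Context: Work over $\mathbb{R}$. $\mathrm{Gr}(k,n)$ is the Grassmannian of $k$-dimensional linear subspaces of $\mathbb{R}^n$; a linear subspace is identified with its image in $\mathbb{P}^{n-1}$, but dimensions of subspaces are always those in $\mathbb{R}^n$. A polytope $P\subseteq\mathbb{P}^{n-1}$ is the image in $\mathbb{P}^{n-1}$ of a cone $\{\sum_{i=1}^m c_iv_i : c_i\ge 0\}$ for finitely many $v_1,\ldots,v_m\in\mathbb{R}^n$ (equivalently, the projectivization of the cone over a polytope lying in an affine hyperplane not through the origin); its faces and their dimensions are those of this polytope. For $V\in\mathrm{Gr}(k,n)$ and $I\in\binom{[n]}{n-k}$, the primal Plücker coordinate $p_I(V)$ is the maximal minor on columns $I$ of an $(n-k)\times n$ matrix $N$ with $V=\ker N$ (well defined up to a common nonzero scalar). For an $(n-k)\times n$ matrix $M$, $q_I(M)$ denotes its maximal minor on columns $I$. Vector of Chow forms: fix an ordering $G_1,\ldots,G_f$ of the $(n-k-1)$-dimensional faces of $P$; for each $G_i$ choose $n-k$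 linearly independent vertices (as vectors in $\mathbb{R}^n$) $v^i_1,\ldots,v^i_{n-k}$ of $G_i$ and let $M^i$ be the $(n-k)\times n$ matrix with rows $v^i_1,\ldots,v^i_{n-k}$ in this order. The Chow form of $G_i$ is $C_{G_i}(V)=\sum_{I\in\binom{[n]}{n-k}} q_I(M^i)\,p_I(V)$; it vanishes exactly when $V$ meets the linear span of $G_i$ nontrivially. The vector of Chow forms is $\mathrm{C}_P^k=(C_{G_1},\ldots,C_{G_f})$. *)

theory Defs
  imports "HOL-Analysis.Analysis"
begin

definition det_nat :: "nat \<Rightarrow> (nat \<Rightarrow> nat \<Rightarrow> real) \<Rightarrow> real" where
  "det_nat m A = (\<Sum>p | p permutes {..<m}. of_int (sign p) * (\<Prod>i<m. A i (p i)))"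

text \<open>An m x n matrix is given by its rows R 0, ..., R (m-1) in R^n, where the column
  index type 'n (of cardinality n) carries the standard order of [n].
  maxminor m R I is the maximal minor on the columns I (card I = m), taken in increasing order.\<close>
definition maxminor :: "nat \<Rightarrow> (nat \<Rightarrow> real ^ 'n::{finite,linorder}) \<Rightarrow> 'n set \<Rightarrow> real" where
  "maxminor m R I = det_nat m (\<lambda>i j. R i $ (sorted_list_of_set I ! j))"

definition row_kernel :: "nat \<Rightarrow> (nat \<Rightarrow> real ^ 'n::finite) \<Rightarrow> (real ^ 'n) set" where
  "row_kernel m N = {x. \<forall>i<m. N i \<bullet> x = 0}"

text \<open>Chow form of a face with chosen vertex matrix M (rows M 0..M (m-1)), evaluated at the
  subspace ker N, with primal Pluecker coordinates p_I = maxminor m N I.\<close>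
definition chow_form :: "nat \<Rightarrow> (nat \<Rightarrow> real ^ 'n::{finite,linorder}) \<Rightarrow> (nat \<Rightarrow> real ^ 'n::{finite,linorder}) \<Rightarrow> real" where
  "chow_form m M N = (\<Sum>I \<in> {I. card I = m}. maxminor m M I * maxminor m N I)"

end

theory Submission
  imports Defs "Jordan_Normal_Form.Determinant"
begin


lemma dim_hyp:
  fixes S :: "'a::euclidean_space set" and a :: 'a
  assumes "S \<subseteq> {x. a \<bullet> x = b}" "b \<noteq> 0"
  shows "int (dim S) = aff_dim S + 1"
proof -
  have "affine hull S \<subseteq> {x. a \<bullet> x = b}" using assms(1) by (intro hull_minimal) (auto simp: affine_hyperplane)
  hence "0 \<notin> affine hull S" using assms(2) by auto
  hence 1: "aff_dim (insert 0 S) = aff_dim S + 1" by (simp add: aff_dim_insert)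
  have 2: "affine hull (insert 0 S) = span (insert 0 S)" by (rule affine_hull_span_0) (simp add: hull_inc)
  have "aff_dim (insert 0 S) = aff_dim (affine hull (insert 0 S))" by simp
  also have "\<dots> = int (dim (span (insert 0 S)))" unfolding 2 by (simp add: aff_dim_subspace)
  also have "\<dots> = int (dim S)" by (simp add: dim_span dim_insert span_zero)
  finally show ?thesis using 1 by simp
qed

lemma span_hyp_aff:
  fixes S :: "'a::euclidean_space set" and a y :: 'a
  assumes "S \<subseteq> {x. a \<bullet> x = b}" "b \<noteq> 0" "y \<in> span S" "a \<bullet> y = b"
  shows "y \<in> affine hull S"
proof -
  obtain T u where T: "finite T" "T \<subseteq> S" and y: "y = (\<Sum>v\<in>T. u v *\<^sub>R v)"
    using assms(3) by (auto simp: span_explicit)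
  have "a \<bullet> y = (\<Sum>v\<in>T. u v * (a \<bullet> v))" unfolding y by (simp add: inner_sum_right)
  also have "\<dots> = (\<Sum>v\<in>T. u v * b)" using T assms(1) by (intro sum.cong) auto
  also have "\<dots> = b * sum u T" by (simp add: sum_distrib_left mult.commute)
  finally have "sum u T = 1" using assms(2,4) by simp
  hence "T \<noteq> {}" by auto
  thus ?thesis unfolding affine_hull_explicit using T \<open>sum u T = 1\<close> y by blast
qed

lemma ray_contra:
  fixes F :: "'a::euclidean_space set" and H :: "'a set set" and a q u :: 'a and ah :: "'a set \<Rightarrow> 'a"
  assumes bnd: "bounded F" and seq: "F = affine hull F \<inter> \<Inter>H"
    and ab: "\<And>h. h \<in> H \<Longrightarrow> h = {x. ah h \<bullet> x \<le> bh h}"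
    and hyp: "F \<subseteq> {x. a \<bullet> x = b}" "b \<noteq> 0"
    and q: "q \<in> span F" "a \<bullet> q = b" and u: "u \<in> span F" "a \<bullet> u = 0" "u \<noteq> 0"
    and le: "\<And>h. h \<in> H \<Longrightarrow> ah h \<bullet> q \<le> bh h \<and> ah h \<bullet> u \<le> 0"
  shows False
proof -
  have mem: "q + t *\<^sub>R u \<in> F" if "t \<ge> 0" for t
  proof -
    have "q + t *\<^sub>R u \<in> span F" using q u by (simp add: span_add span_mul)
    moreover have "a \<bullet> (q + t *\<^sub>R u) = b" using q u by (simp add: inner_add_right)
    ultimately have "q + t *\<^sub>R u \<in> affine hull F" using span_hyp_aff[OF hyp] by blast
    moreover have "q + t *\<^sub>R u \<in> \<Inter>H"
    proof
      fix h assume h: "h \<in> H"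
      have "ah h \<bullet> (q + t *\<^sub>R u) = ah h \<bullet> q + t * (ah h \<bullet> u)" by (simp add: inner_add_right)
      also have "\<dots> \<le> bh h" using le[OF h] that
        by (smt (verit) mult_nonneg_nonpos)
      finally have "ah h \<bullet> (q + t *\<^sub>R u) \<le> bh h" .
      then show "q + t *\<^sub>R u \<in> h" using ab[OF h] by (metis (no_types, lifting) mem_Collect_eq)
    qed
    ultimately show ?thesis using seq by blast
  qed
  obtain R where R: "\<And>x. x \<in> F \<Longrightarrow> norm x \<le> R" using bnd bounded_iff by blast
  define t where "t = (R + norm q + 1) / norm u"
  have nu: "norm u > 0" using u by simp
  have "norm q \<le> R" using R[OF mem[of 0]] by simp
  hence Rpos: "R + norm q + 1 > 0" using norm_ge_zero[of q] by linarith
  hence t0: "t \<ge> 0" unfolding t_def using nu by simp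
  have "norm (t *\<^sub>R u) = R + norm q + 1" unfolding t_def using nu Rpos by auto
  moreover have "norm (t *\<^sub>R u) \<le> norm (q + t *\<^sub>R u) + norm q" by (metis add_diff_cancel_left' norm_triangle_ineq4 add.commute)
  moreover have "norm (q + t *\<^sub>R u) \<le> R" using R mem t0 by blast
  ultimately show False by linarith
qed

lemma facet_avoid:
  fixes F :: "'a::euclidean_space set" and a w :: 'a
  assumes poly: "polytope F" and hyp: "F \<subseteq> {x. a \<bullet> x = b}" "b \<noteq> 0"
    and ad: "aff_dim F \<ge> 1" and w: "w \<in> span F" "w \<noteq> 0"
  shows "\<exists>F1. F1 facet_of F \<and> w \<notin> span F1"
proof (rule ccontr)
  assume "\<not> ?thesis"
  hence all: "\<And>F1. F1 facet_of F \<Longrightarrow> w \<in> span F1" by blast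
  have "polyhedron F" using poly by (rule polytope_imp_polyhedron)
  then obtain H where "finite H" and seq: "F = affine hull F \<inter> \<Inter>H"
             and faces: "\<And>h. h \<in> H \<Longrightarrow> \<exists>a b. a \<noteq> 0 \<and> h = {x. a \<bullet> x \<le> b}"
             and min: "\<And>F'. F' \<subset> H \<Longrightarrow> F \<subset> (affine hull F) \<inter> \<Inter>F'"
    by (simp add: polyhedron_Int_affine_minimal) meson
  then obtain ah bh where ab: "\<And>h. h \<in> H \<Longrightarrow> ah h \<noteq> 0 \<and> h = {x. ah h \<bullet> x \<le> bh h}"
    by metis
  have ab': "\<And>h. h \<in> H \<Longrightarrow> h = {x. ah h \<bullet> x \<le> bh h}" using ab by blast
  have facet: "(F \<inter> {x. ah h \<bullet> x = bh h}) facet_of F" if "h \<in> H" for h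
    using facet_of_polyhedron_explicit[OF \<open>finite H\<close> seq ab min] that by blast
  have inF: "ah h \<bullet> x \<le> bh h" if "h \<in> H" "x \<in> F" for h x
  proof -
    have "x \<in> h" using seq that by blast
    thus ?thesis using ab'[OF that(1)] by blast
  qed
  have key: "(ah h - (bh h / b) *\<^sub>R a) \<bullet> w = 0" if h: "h \<in> H" for h
  proof -
    let ?c = "ah h - (bh h / b) *\<^sub>R a"
    have "F \<inter> {x. ah h \<bullet> x = bh h} \<subseteq> {x. ?c \<bullet> x = 0}" using hyp by (auto simp: inner_diff_left)
    hence "span (F \<inter> {x. ah h \<bullet> x = bh h}) \<subseteq> {x. ?c \<bullet> x = 0}"
      by (rule span_minimal) (simp add: subspace_hyperplane)
    with all[OF facet[OF h]] show ?thesis by auto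
  qed
  have ahw: "ah h \<bullet> w = (bh h / b) * (a \<bullet> w)" if "h \<in> H" for h
    using key[OF that] by (simp add: inner_diff_left algebra_simps)
  have bnd: "bounded F" using poly by (rule polytope_imp_bounded)
  have "F \<noteq> {}" using ad by auto
  then obtain x0 where x0: "x0 \<in> F" by auto
  have x0s: "x0 \<in> span F" using x0 by (rule span_base)
  have ax0: "a \<bullet> x0 = b" using x0 hyp by auto
  show False
  proof (cases "a \<bullet> w = 0")
    case True
    show False
      by (rule ray_contra[OF bnd seq ab' hyp x0s ax0 w(1) True w(2)]) (use inF x0 ahw True in auto)
  next
    case False
    define p where "p = (b / (a \<bullet> w)) *\<^sub>R w"
    have ps: "p \<in> span F" unfolding p_def using w by (simp add: span_mul)
    have ap: "a \<bullet> p = b" unfolding p_def using False by simp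
    have ahp: "ah h \<bullet> p = bh h" if "h \<in> H" for h
      unfolding p_def using ahw[OF that] False hyp by (simp add: field_simps)
    obtain x1 where x1: "x1 \<in> F" "x1 \<noteq> p"
    proof (rule ccontr)
      assume "\<not> thesis"
      hence "F \<subseteq> {p}" using that by blast
      hence "F = {p}" using x0 by blast
      thus False using ad by simp
    qed
    have x1s: "x1 \<in> span F" using x1 by (simp add: span_base)
    have ax1: "a \<bullet> x1 = b" using x1 hyp by auto
    show False
      by (rule ray_contra[OF bnd seq ab' hyp ps ap, of "x1 - p"])
         (use x1s ps ax1 ap x1 ahp inF in \<open>auto simp: span_diff inner_diff_right\<close>)
  qed
qed

lemma face_avoid_ind:
  fixes Q :: "'a::euclidean_space set" and a :: 'a
  assumes Q: "polytope Q" "Q \<subseteq> {x. a \<bullet> x = b}" "b \<noteq> 0"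
  shows "F face_of Q \<Longrightarrow> subspace W \<Longrightarrow> W \<subseteq> span F \<Longrightarrow> dim W = j \<Longrightarrow> j \<le> dim F
    \<Longrightarrow> \<exists>G. G face_of F \<and> dim G = dim F - j \<and> W \<inter> span G \<subseteq> {0}"
proof (induction j arbitrary: F W)
  case 0
  have "polytope F" using face_of_polytope_polytope[OF Q(1) 0(1)] .
  hence "F face_of F" by (simp add: face_of_refl polytope_imp_convex)
  moreover have "W \<subseteq> {0}" using 0 dim_eq_0 by blast
  ultimately show ?case by auto
next
  case (Suc j)
  have polyF: "polytope F" using face_of_polytope_polytope[OF Q(1) Suc(2)] .
  have hypF: "F \<subseteq> {x. a \<bullet> x = b}" using face_of_imp_subset[OF Suc(2)] Q(2) by blast
  obtain w where w: "w \<in> W" "w \<noteq> 0"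
  proof (rule ccontr)
    assume "\<not> thesis"
    hence "W \<subseteq> {0}" using that by blast
    thus False using Suc(5) dim_eq_0[of W] by simp
  qed
  show ?case
  proof (cases "Suc j = dim F")
    case True
    have "({}::'a set) face_of F" by simp
    thus ?thesis using True by (intro exI[of _ "{}"]) auto
  next
    case False
    have dF: "int (dim F) = aff_dim F + 1" by (rule dim_hyp[OF hypF Q(3)])
    have "aff_dim F \<ge> 1" using dF False Suc(6) by linarith
    moreover have ws: "w \<in> span F" using w Suc(4) by blast
    ultimately obtain F1 where F1: "F1 facet_of F" "w \<notin> span F1"
      using facet_avoid[OF polyF hypF Q(3)] w(2) by blast
    have F1F: "F1 face_of F" using F1(1) by (simp add: facet_of_def)
    have F1Q: "F1 face_of Q" using face_of_trans[OF F1F Suc(2)] .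
    have hypF1: "F1 \<subseteq> {x. a \<bullet> x = b}" using face_of_imp_subset[OF F1F] hypF by blast
    have "int (dim F1) = aff_dim F1 + 1" by (rule dim_hyp[OF hypF1 Q(3)])
    hence dF1: "dim F1 + 1 = dim F" using F1(1) dF by (simp add: facet_of_def)
    let ?T = "span F1"
    let ?W1 = "W \<inter> ?T"
    have sT: "subspace ?T" by simp
    have sW1: "subspace ?W1" using Suc(3) sT by (simp add: subspace_inter)
    have sum_sub: "{x + y |x y. x \<in> W \<and> y \<in> ?T} \<subseteq> span F"
    proof -
      have "?T \<subseteq> span F" using face_of_imp_subset[OF F1F] by (rule span_mono)
      thus ?thesis using Suc(4) by (auto intro: span_add)
    qed
    have "dim {x + y |x y. x \<in> W \<and> y \<in> ?T} \<le> dim F"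
      using dim_subset[OF sum_sub] by (simp add: dim_span)
    moreover have "insert w ?T \<subseteq> {x + y |x y. x \<in> W \<and> y \<in> ?T}"
    proof
      fix x assume "x \<in> insert w ?T"
      then consider "x = w" | "x \<in> ?T" by blast
      thus "x \<in> {x + y |x y. x \<in> W \<and> y \<in> ?T}"
      proof cases
        case 1 thus ?thesis using w(1) by (intro CollectI exI[of _ w] exI[of _ 0]) (auto simp: span_zero)
      next
        case 2 thus ?thesis using subspace_0[OF Suc(3)] by (intro CollectI exI[of _ 0] exI[of _ x]) auto
      qed
    qed
    hence "dim (insert w ?T) \<le> dim {x + y |x y. x \<in> W \<and> y \<in> ?T}" by (rule dim_subset)
    moreover have "dim (insert w ?T) = dim F1 + 1" using F1(2) by (simp add: dim_insert dim_span span_span)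
    ultimately have "dim {x + y |x y. x \<in> W \<and> y \<in> ?T} = dim F" using dF1 by linarith
    moreover have "dim {x + y |x y. x \<in> W \<and> y \<in> ?T} + dim ?W1 = dim W + dim ?T"
      by (rule dim_sums_Int[OF Suc(3) sT])
    ultimately have dW1: "dim ?W1 = j" using Suc(5) dF1 by (simp add: dim_span)
    have "\<exists>G. G face_of F1 \<and> dim G = dim F1 - j \<and> ?W1 \<inter> span G \<subseteq> {0}"
      by (rule Suc.IH[OF F1Q sW1 _ dW1]) (use Suc(6) dF1 in auto)
    then obtain G where G: "G face_of F1" "dim G = dim F1 - j" "?W1 \<inter> span G \<subseteq> {0}" by blast
    have "span G \<subseteq> ?T" using face_of_imp_subset[OF G(1)] by (rule span_mono)
    hence "W \<inter> span G \<subseteq> {0}" using G(3) by blast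
    moreover have "G face_of F" using face_of_trans[OF G(1) F1F] .
    moreover have "dim G = dim F - Suc j" using G(2) dF1 by simp
    ultimately show ?thesis by blast
  qed
qed



lemma det_nat_cong:
  assumes "\<And>i j. i < m \<Longrightarrow> j < m \<Longrightarrow> A i j = B i j"
  shows "det_nat m A = det_nat m B"
  unfolding det_nat_def
proof (intro sum.cong refl)
  fix p assume "p \<in> {p. p permutes {..<m}}"
  hence p: "p permutes {..<m}" by simp
  show "of_int (sign p) * (\<Prod>i<m. A i (p i)) = of_int (sign p) * (\<Prod>i<m. B i (p i))"
    using assms permutes_in_image[OF p] by (auto intro!: prod.cong)
qed

lemma det_nat_jnf: "det_nat m A = Determinant.det (Matrix.mat m m (\<lambda>(i,j). A i j))"
proof -
  have "Determinant.det (Matrix.mat m m (\<lambda>(i,j). A i j)) = (\<Sum>p | p permutes {..<m}. of_int (sign p) * (\<Prod>i<m. Matrix.mat m m (\<lambda>(i,j). A i j) $$ (i, p i)))"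
    by (simp add: Determinant.det_def atLeast0LessThan)
  also have "\<dots> = det_nat m A" unfolding det_nat_def
  proof (intro sum.cong refl)
    fix p assume "p \<in> {p. p permutes {..<m}}"
    hence p: "p permutes {..<m}" by simp
    have "p i < m" if "i < m" for i using permutes_in_image[OF p, of i] that by simp
    thus "of_int (sign p) * (\<Prod>i<m. Matrix.mat m m (\<lambda>(i,j). A i j) $$ (i, p i)) = of_int (sign p) * (\<Prod>i<m. A i (p i))"
      by (auto intro!: prod.cong)
  qed
  finally show ?thesis by simp
qed

lemma det_nat_identical_rows:
  assumes "i < m" "j < m" "i \<noteq> j" "\<And>c. c < m \<Longrightarrow> A i c = A j c"
  shows "det_nat m A = 0"
  unfolding det_nat_jnf
  by (rule det_identical_rows[of _ m, OF _ assms(3,1,2)]) (auto intro!: eq_vecI simp: assms)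

lemma det_nat_permute_rows:
  assumes p: "p permutes {..<m}"
  shows "det_nat m (\<lambda>i j. A (p i) j) = of_int (sign p) * det_nat m A"
proof -
  have p': "p permutes {0..<m}" using p by (simp add: atLeast0LessThan)
  have "Matrix.mat m m (\<lambda>(i,j). A (p i) j) = Matrix.mat m m (\<lambda>(i,j). Matrix.mat m m (\<lambda>(i,j). A i j) $$ (p i, j))"
    using permutes_in_image[OF p] by (intro eq_matI) auto
  thus ?thesis unfolding det_nat_jnf using det_permute_rows[OF _ p', of "Matrix.mat m m (\<lambda>(i,j). A i j)"]
    by simp
qed

lemma det_nat_transpose: "det_nat m (\<lambda>i j. A j i) = det_nat m A"
proof -
  have "Matrix.mat m m (\<lambda>(i,j). A j i) = transpose_mat (Matrix.mat m m (\<lambda>(i,j). A i j))"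
    by (intro eq_matI) auto
  thus ?thesis unfolding det_nat_jnf using det_transpose[of "Matrix.mat m m (\<lambda>(i,j). A i j)" m] by simp
qed

lemma det_nat_mult: "det_nat m (\<lambda>i j. \<Sum>l<m. A i l * B l j) = det_nat m A * det_nat m B"
proof -
  have "Matrix.mat m m (\<lambda>(i,j). \<Sum>l<m. A i l * B l j) = Matrix.mat m m (\<lambda>(i,j). A i j) * Matrix.mat m m (\<lambda>(i,j). B i j)"
    by (intro eq_matI) (auto simp: scalar_prod_def atLeast0LessThan intro!: sum.cong)
  thus ?thesis unfolding det_nat_jnf using det_mult[of "Matrix.mat m m (\<lambda>(i,j). A i j)" m "Matrix.mat m m (\<lambda>(i,j). B i j)"] by simp
qed

lemma det_nat_zero:
  assumes "det_nat m A = 0"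
  shows "\<exists>v. (\<exists>i<m. v i \<noteq> 0) \<and> (\<forall>j<m. (\<Sum>i<m. v i * A i j) = 0)"
proof -
  let ?B = "Matrix.mat m m (\<lambda>(i,j). A j i)"
  have "Determinant.det ?B = 0" using assms det_nat_transpose[of m A] unfolding det_nat_jnf by simp
  then obtain w where w: "w \<in> carrier_vec m" "w \<noteq> 0\<^sub>v m" "?B *\<^sub>v w = 0\<^sub>v m"
    using det_0_iff_vec_prod_zero_field[of ?B m] by auto
  have "\<exists>i<m. w $ i \<noteq> 0"
  proof (rule ccontr)
    assume "\<not> ?thesis"
    hence "w = 0\<^sub>v m" using w(1) by (intro eq_vecI) auto
    thus False using w(2) by simp
  qed
  moreover have "(\<Sum>i<m. w $ i * A i j) = 0" if "j < m" for j
  proof -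
    have "(?B *\<^sub>v w) $ j = 0" using w(3) that by simp
    thus ?thesis using that w(1) by (simp add: scalar_prod_def atLeast0LessThan mult.commute)
  qed
  ultimately show ?thesis by (intro exI[of _ "\<lambda>i. w $ i"]) auto
qed



lemma sl_props:
  fixes I :: "'n::{finite,linorder} set"
  assumes "card I = m"
  shows "length (sorted_list_of_set I) = m" "distinct (sorted_list_of_set I)"
    "set (sorted_list_of_set I) = I" "bij_betw ((!) (sorted_list_of_set I)) {..<m} I"
proof -
  show 1: "length (sorted_list_of_set I) = m" using assms by simp
  show 2: "distinct (sorted_list_of_set I)" by simp
  show 3: "set (sorted_list_of_set I) = I" by simp
  show "bij_betw ((!) (sorted_list_of_set I)) {..<m} I"
    by (rule bij_betw_nth) (use 1 2 3 in auto)
qed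

lemma h_bij:
  "bij_betw (\<lambda>(I,p). restrict (\<lambda>i. sorted_list_of_set I ! p i) {..<m})
     (SIGMA I:{I::'n::{finite,linorder} set. card I = m}. {p. p permutes {..<m}})
     {f \<in> PiE {..<m} (\<lambda>_. UNIV). inj_on f {..<m}}"
  unfolding bij_betw_def
proof (intro conjI)
  let ?h = "\<lambda>(I::'n set,p). restrict (\<lambda>i. sorted_list_of_set I ! p i) {..<m}"
  have img: "(\<lambda>i. sorted_list_of_set I ! p i) ` {..<m} = I" if "card I = m" "p permutes {..<m}" for I :: "'n set" and p
  proof -
    have "(\<lambda>i. sorted_list_of_set I ! p i) ` {..<m} = (!) (sorted_list_of_set I) ` (p ` {..<m})" by auto
    also have "\<dots> = I" using permutes_image[OF that(2)] bij_betw_imp_surj_on[OF sl_props(4)[OF that(1)]] by simp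
    finally show ?thesis .
  qed
  show "inj_on ?h (SIGMA I:{I. card I = m}. {p. p permutes {..<m}})"
  proof (rule inj_onI)
    fix x y assume x: "x \<in> (SIGMA I:{I. card I = m}. {p. p permutes {..<m}})"
      and y: "y \<in> (SIGMA I:{I. card I = m}. {p. p permutes {..<m}})" and hxy: "?h x = ?h y"
    obtain I p where xx: "x = (I::'n set,p)" and I: "card (I::'n set) = m" and p: "p permutes {..<m}" using x by auto
    obtain I' p' where yy: "y = (I'::'n set,p')" and I': "card (I'::'n set) = m" and p': "p' permutes {..<m}" using y by auto
    have eq: "restrict (\<lambda>i. sorted_list_of_set I ! p i) {..<m} = restrict (\<lambda>i. sorted_list_of_set I' ! p' i) {..<m}"
      using hxy xx yy by simp
    have eq2: "sorted_list_of_set I ! p i = sorted_list_of_set I' ! p' i" if "i < m" for i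
      using fun_cong[OF eq, of i] that by simp
    have "(\<lambda>i. sorted_list_of_set I ! p i) ` {..<m} = (\<lambda>i. sorted_list_of_set I' ! p' i) ` {..<m}"
      using eq2 by (auto intro!: image_cong)
    hence II: "I = I'" using img[OF I p] img[OF I' p'] by simp
    have "p i = p' i" for i
    proof (cases "i < m")
      case True
      have "p i < m" "p' i < m" using permutes_in_image[OF p, of i] permutes_in_image[OF p', of i] True by auto
      thus ?thesis using eq2[OF True] II inj_onD[OF bij_betw_imp_inj_on[OF sl_props(4)[OF I]]] by auto
    next
      case False
      thus ?thesis using permutes_not_in[OF p] permutes_not_in[OF p'] by auto
    qed
    thus "x = y" using II xx yy by auto
  qed
  show "?h ` (SIGMA I:{I. card I = m}. {p. p permutes {..<m}}) = {f \<in> PiE {..<m} (\<lambda>_. UNIV). inj_on f {..<m}}"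
  proof (intro equalityI subsetI)
    fix f assume "f \<in> ?h ` (SIGMA I:{I. card I = m}. {p. p permutes {..<m}})"
    then obtain I p where I: "card (I::'n set) = m" and p: "p permutes {..<m}" and f: "f = restrict (\<lambda>i. sorted_list_of_set I ! p i) {..<m}"
      by auto
    have "inj_on (\<lambda>i. sorted_list_of_set I ! p i) {..<m}"
    proof (rule comp_inj_on[of p, unfolded o_def])
      show "inj_on p {..<m}" using p by (meson permutes_inj_on)
      show "inj_on ((!) (sorted_list_of_set I)) (p ` {..<m})"
        using permutes_image[OF p] bij_betw_imp_inj_on[OF sl_props(4)[OF I]] by simp
    qed
    hence "inj_on f {..<m}" unfolding f by (simp add: inj_on_def)
    thus "f \<in> {f \<in> PiE {..<m} (\<lambda>_. UNIV). inj_on f {..<m}}" unfolding f by auto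
  next
    fix f :: "nat \<Rightarrow> 'n" assume "f \<in> {f \<in> PiE {..<m} (\<lambda>_. UNIV). inj_on f {..<m}}"
    hence fP: "f \<in> PiE {..<m} (\<lambda>_. UNIV)" and fi: "inj_on f {..<m}" by auto
    define I where "I = f ` {..<m}"
    have I: "card I = m" unfolding I_def using card_image[OF fi] by simp
    let ?g = "(!) (sorted_list_of_set I)"
    have gb: "bij_betw ?g {..<m} I" by (rule sl_props(4)[OF I])
    define p where "p = (\<lambda>i. if i < m then the_inv_into {..<m} ?g (f i) else i)"
    have fb: "bij_betw f {..<m} I" unfolding I_def using fi by (simp add: bij_betw_imageI)
    have "bij_betw (the_inv_into {..<m} ?g \<circ> f) {..<m} {..<m}"
      by (rule bij_betw_trans[OF fb bij_betw_the_inv_into[OF gb]])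
    hence "bij_betw p {..<m} {..<m}" by (rule bij_betw_cong[THEN iffD1, rotated]) (simp add: p_def)
    hence p: "p permutes {..<m}" by (rule bij_imp_permutes) (simp add: p_def)
    have "f = restrict (\<lambda>i. sorted_list_of_set I ! p i) {..<m}"
    proof
      fix i show "f i = restrict (\<lambda>i. sorted_list_of_set I ! p i) {..<m} i"
      proof (cases "i < m")
        case True
        have "f i \<in> I" unfolding I_def using True by auto
        thus ?thesis using True f_the_inv_into_f_bij_betw[OF gb] by (simp add: p_def)
      next
        case False
        thus ?thesis using fP by (auto simp: PiE_def extensional_def)
      qed
    qed
    thus "f \<in> ?h ` (SIGMA I:{I. card I = m}. {p. p permutes {..<m}})"
      using I p by (intro image_eqI[of _ _ "(I,p)"]) auto
  qed
qed



lemma cauchy_binet: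
  fixes M N :: "nat \<Rightarrow> real ^ 'n::{finite,linorder}"
  shows "det_nat m (\<lambda>i j. M i \<bullet> N j) = chow_form m M N"
proof -
  let ?P = "{p. p permutes {..<m}}"
  let ?F = "PiE {..<m} (\<lambda>_. UNIV :: 'n set)"
  let ?S = "{f \<in> ?F. inj_on f {..<m}}"
  let ?Sig = "SIGMA I:{I::'n set. card I = m}. ?P"
  let ?s = "\<lambda>I::'n set. sorted_list_of_set I"
  define E where "E f = det_nat m (\<lambda>i j. N j $ f i)" for f :: "nat \<Rightarrow> 'n"
  have E_def': "E f = (\<Sum>p\<in>?P. of_int (sign p) * (\<Prod>i<m. N (p i) $ f i))" for f
    unfolding E_def det_nat_def by simp
  have finP: "finite ?P" by (simp add: finite_permutations)
  have finF: "finite ?F" by (simp add: finite_PiE)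
  have "det_nat m (\<lambda>i j. M i \<bullet> N j) = (\<Sum>p\<in>?P. of_int (sign p) * (\<Prod>i<m. \<Sum>c\<in>UNIV. M i $ c * N (p i) $ c))"
    unfolding det_nat_def inner_vec_def by simp
  also have "\<dots> = (\<Sum>p\<in>?P. of_int (sign p) * (\<Sum>f\<in>?F. \<Prod>i<m. M i $ f i * N (p i) $ f i))"
    by (subst prod_sum_PiE) auto
  also have "\<dots> = (\<Sum>p\<in>?P. \<Sum>f\<in>?F. (\<Prod>i<m. M i $ f i) * (of_int (sign p) * (\<Prod>i<m. N (p i) $ f i)))"
    by (simp add: sum_distrib_left prod.distrib mult_ac)
  also have "\<dots> = (\<Sum>f\<in>?F. \<Sum>p\<in>?P. (\<Prod>i<m. M i $ f i) * (of_int (sign p) * (\<Prod>i<m. N (p i) $ f i)))"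
    by (rule sum.swap)
  also have "\<dots> = (\<Sum>f\<in>?F. (\<Prod>i<m. M i $ f i) * E f)"
    by (simp add: E_def' sum_distrib_left)
  also have "\<dots> = (\<Sum>f\<in>?S. (\<Prod>i<m. M i $ f i) * E f)"
  proof -
    have zero: "\<forall>f\<in>?F - ?S. (\<Prod>i<m. M i $ f i) * E f = 0"
    proof
      fix f assume "f \<in> ?F - ?S"
      hence "\<not> inj_on f {..<m}" by blast
      then obtain i j where ij: "i < m" "j < m" "i \<noteq> j" "f i = f j" unfolding inj_on_def by auto
      have "E f = 0" unfolding E_def by (rule det_nat_identical_rows[OF ij(1,2,3)]) (simp add: ij(4))
      thus "(\<Prod>i<m. M i $ f i) * E f = 0" by simp
    qed
    have sub: "?S \<subseteq> ?F" by blast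
    show ?thesis by (rule sum.mono_neutral_right[OF finF sub zero])
  qed
  also have "\<dots> = (\<Sum>x\<in>?Sig. (\<lambda>f. (\<Prod>i<m. M i $ f i) * E f) ((\<lambda>(I,p). restrict (\<lambda>i. ?s I ! p i) {..<m}) x))"
    by (rule sum.reindex_bij_betw[OF h_bij, symmetric])
  also have "\<dots> = (\<Sum>I\<in>{I::'n set. card I = m}. \<Sum>p\<in>?P. (\<Prod>i<m. M i $ (?s I ! p i)) * E (restrict (\<lambda>i. ?s I ! p i) {..<m}))"
    by (subst sum.Sigma) (auto simp: finP intro!: sum.cong prod.cong)
  also have "\<dots> = (\<Sum>I\<in>{I::'n set. card I = m}. maxminor m M I * maxminor m N I)"
  proof (rule sum.cong[OF refl])
    fix I :: "'n set" assume "I \<in> {I. card I = m}"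
    have "(\<Prod>i<m. M i $ (?s I ! p i)) * E (restrict (\<lambda>i. ?s I ! p i) {..<m})
          = maxminor m N I * (of_int (sign p) * (\<Prod>i<m. M i $ (?s I ! p i)))" if p: "p \<in> ?P" for p
    proof -
      have "E (restrict (\<lambda>i. ?s I ! p i) {..<m}) = det_nat m (\<lambda>i j. N j $ (?s I ! p i))"
        unfolding E_def by (rule det_nat_cong) simp
      also have "\<dots> = of_int (sign p) * det_nat m (\<lambda>i j. N j $ (?s I ! i))"
        using det_nat_permute_rows[of p m "\<lambda>i j. N j $ (?s I ! i)"] p by simp
      also have "det_nat m (\<lambda>i j. N j $ (?s I ! i)) = maxminor m N I"
        unfolding maxminor_def using det_nat_transpose[of m "\<lambda>i j. N i $ (?s I ! j)"] by simp
      finally have Eeq: "E (restrict (\<lambda>i. ?s I ! p i) {..<m}) = of_int (sign p) * maxminor m N I" .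
      show ?thesis by (simp only: Eeq) (simp add: mult_ac)
    qed
    note pt = this
    have "(\<Sum>p\<in>?P. (\<Prod>i<m. M i $ (?s I ! p i)) * E (restrict (\<lambda>i. ?s I ! p i) {..<m}))
       = maxminor m N I * (\<Sum>p\<in>?P. of_int (sign p) * (\<Prod>i<m. M i $ (?s I ! p i)))"
      unfolding sum_distrib_left by (intro sum.cong refl) (erule pt)
    also have "(\<Sum>p\<in>?P. of_int (sign p) * (\<Prod>i<m. M i $ (?s I ! p i))) = maxminor m M I"
      unfolding maxminor_def det_nat_def by simp
    finally show "(\<Sum>p\<in>?P. (\<Prod>i<m. M i $ (?s I ! p i)) * E (restrict (\<lambda>i. ?s I ! p i) {..<m}))
       = maxminor m M I * maxminor m N I" by (simp only: mult.commute)
  qed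
  also have "\<dots> = chow_form m M N" unfolding chow_form_def by simp
  finally show ?thesis .
qed



lemma chow_nonzero:
  fixes M N :: "nat \<Rightarrow> real ^ 'n::{finite,linorder}"
  assumes ind: "independent (M ` {..<m})" and inj: "inj_on M {..<m}"
    and avoid: "span (M ` {..<m}) \<inter> row_kernel m N \<subseteq> {0}"
  shows "chow_form m M N \<noteq> 0"
proof
  assume "chow_form m M N = 0"
  hence "det_nat m (\<lambda>i j. M i \<bullet> N j) = 0" by (simp add: cauchy_binet)
  then obtain v where v: "\<exists>i<m. v i \<noteq> 0" "\<forall>j<m. (\<Sum>i<m. v i * (M i \<bullet> N j)) = 0"
    using det_nat_zero by blast
  define x where "x = (\<Sum>i<m. v i *\<^sub>R M i)"
  have "x \<in> span (M ` {..<m})" unfolding x_def by (intro span_sum span_mul span_base) auto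
  moreover have "x \<in> row_kernel m N" unfolding row_kernel_def
  proof (intro CollectI allI impI)
    fix j assume j: "j < m"
    have "N j \<bullet> x = (\<Sum>i<m. v i * (M i \<bullet> N j))" unfolding x_def by (simp add: inner_sum_right inner_commute)
    thus "N j \<bullet> x = 0" using v(2) j by simp
  qed
  ultimately have x0: "x = 0" using avoid by blast
  define u where "u y = v (the_inv_into {..<m} M y)" for y
  have "(\<Sum>y\<in>M ` {..<m}. u y *\<^sub>R y) = (\<Sum>i<m. u (M i) *\<^sub>R M i)" by (simp add: sum.reindex[OF inj])
  also have "\<dots> = x" unfolding x_def u_def by (intro sum.cong refl) (simp add: the_inv_into_f_f[OF inj])
  finally have s0: "(\<Sum>y\<in>M ` {..<m}. u y *\<^sub>R y) = 0" using x0 by simp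
  obtain i where i: "i < m" "v i \<noteq> 0" using v(1) by blast
  have "u (M i) \<noteq> 0" unfolding u_def using i by (simp add: the_inv_into_f_f[OF inj])
  hence "dependent (M ` {..<m})" unfolding dependent_explicit using s0 i
    by (intro exI[of _ "M ` {..<m}"] exI[of _ u]) auto
  thus False using ind by simp
qed

lemma row_span:
  fixes N N' :: "nat \<Rightarrow> real ^ 'n::finite"
  assumes ker: "row_kernel m N' = row_kernel m N" and j: "j < m"
  shows "\<exists>c. N' j = (\<Sum>l<m. c l *\<^sub>R N l)"
proof -
  let ?S = "N ` {..<m}"
  obtain y z where yz: "y \<in> span ?S" "\<And>w. w \<in> span ?S \<Longrightarrow> Linear_Algebra.orthogonal z w" "N' j = y + z"
    by (rule orthogonal_subspace_decomp_exists[where S = "N ` {..<m}" and x = "N' j"]) blast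
  have "\<forall>i<m. N i \<bullet> z = 0"
  proof (intro allI impI)
    fix i assume "i < m"
    hence "N i \<in> span ?S" by (simp add: span_base)
    hence "Linear_Algebra.orthogonal z (N i)" by (rule yz(2))
    thus "N i \<bullet> z = 0" by (simp add: Linear_Algebra.orthogonal_def inner_commute)
  qed
  hence "z \<in> row_kernel m N" unfolding row_kernel_def by simp
  hence "N' j \<bullet> z = 0" using ker j unfolding row_kernel_def by auto
  moreover have "y \<bullet> z = 0" using yz(2)[OF yz(1)] by (simp add: Linear_Algebra.orthogonal_def inner_commute)
  ultimately have "z \<bullet> z = 0" using yz(3) by (simp add: inner_add_left)
  hence "z = 0" by simp
  hence "N' j \<in> span ?S" using yz by simp
  moreover have "span ?S \<subseteq> {x. \<exists>c. x = (\<Sum>l<m. c l *\<^sub>R N l)}"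
  proof (rule span_minimal)
    show "?S \<subseteq> {x. \<exists>c. x = (\<Sum>l<m. c l *\<^sub>R N l)}"
    proof
      fix x assume "x \<in> ?S"
      then obtain l where l: "l < m" "x = N l" by auto
      have "(\<Sum>l'<m. (if l' = l then 1 else 0) *\<^sub>R N l') = (\<Sum>l'<m. (if l' = l then N l' else 0))"
        by (intro sum.cong refl) auto
      also have "\<dots> = N l" using l by simp
      finally show "x \<in> {x. \<exists>c. x = (\<Sum>l<m. c l *\<^sub>R N l)}" using l by (intro CollectI exI[of _ "\<lambda>l'. if l' = l then 1 else 0"]) simp
    qed
    show "subspace {x. \<exists>c. x = (\<Sum>l<m. c l *\<^sub>R N l)}"
      unfolding subspace_def
    proof (intro conjI ballI allI)
      show "0 \<in> {x. \<exists>c. x = (\<Sum>l<m. c l *\<^sub>R N l)}" by (intro CollectI exI[of _ "\<lambda>_. 0"]) simp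
    next
      fix x y assume "x \<in> {x. \<exists>c. x = (\<Sum>l<m. c l *\<^sub>R N l)}" "y \<in> {x. \<exists>c. x = (\<Sum>l<m. c l *\<^sub>R N l)}"
      then obtain c1 c2 where "x = (\<Sum>l<m. c1 l *\<^sub>R N l)" "y = (\<Sum>l<m. c2 l *\<^sub>R N l)" by auto
      thus "x + y \<in> {x. \<exists>c. x = (\<Sum>l<m. c l *\<^sub>R N l)}"
        by (intro CollectI exI[of _ "\<lambda>l. c1 l + c2 l"]) (simp add: scaleR_add_left sum.distrib)
    next
      fix r x assume "x \<in> {x. \<exists>c. x = (\<Sum>l<m. c l *\<^sub>R N l)}"
      then obtain c1 where "x = (\<Sum>l<m. c1 l *\<^sub>R N l)" by auto
      thus "r *\<^sub>R x \<in> {x. \<exists>c. x = (\<Sum>l<m. c l *\<^sub>R N l)}"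
        by (intro CollectI exI[of _ "\<lambda>l. r * c1 l"]) (simp add: scaleR_sum_right)
    qed
  qed
  ultimately show ?thesis by blast
qed

lemma chow_scale:
  fixes M N N' :: "nat \<Rightarrow> real ^ 'n::{finite,linorder}"
  assumes "\<And>j. j < m \<Longrightarrow> N' j = (\<Sum>l<m. A j l *\<^sub>R N l)"
  shows "chow_form m M N' = det_nat m A * chow_form m M N"
proof -
  have "maxminor m N' I = det_nat m A * maxminor m N I" for I
  proof -
    have "maxminor m N' I = det_nat m (\<lambda>i j. \<Sum>l<m. A i l * N l $ (sorted_list_of_set I ! j))"
      unfolding maxminor_def by (rule det_nat_cong) (simp add: assms sum_component)
    also have "\<dots> = det_nat m A * maxminor m N I" unfolding maxminor_def by (rule det_nat_mult)
    finally show ?thesis .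
  qed
  thus ?thesis unfolding chow_form_def by (simp add: sum_distrib_left mult_ac)
qed

theorem lemma2p7:
  fixes Q :: "(real ^ 'n::{finite,linorder}) set"
    and k :: nat
    and verts :: "(real ^ 'n::{finite,linorder}) set \<Rightarrow> nat \<Rightarrow> real ^ 'n::{finite,linorder}"
    and V :: "(real ^ 'n::{finite,linorder}) set"
  assumes poly: "polytope Q"
    and hyp: "\<exists>a b. b \<noteq> 0 \<and> Q \<subseteq> {x. a \<bullet> x = b}"
    and full: "aff_dim Q = int CARD('n) - 1"
    and k1: "1 \<le> k" and kn: "k \<le> CARD('n)"
    and verts: "\<And>G. G face_of Q \<Longrightarrow> aff_dim G = int CARD('n) - int k - 1 \<Longrightarrow>
        (\<forall>i < CARD('n) - k. verts G i extreme_point_of G)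
        \<and> inj_on (verts G) {..<CARD('n) - k}
        \<and> independent (verts G ` {..<CARD('n) - k})"
    and V: "subspace V" "dim V = k"
  shows "(\<forall>N. row_kernel (CARD('n) - k) N = V \<longrightarrow>
            (\<exists>G. G face_of Q \<and> aff_dim G = int CARD('n) - int k - 1 \<and>
                 chow_form (CARD('n) - k) (verts G) N \<noteq> 0))
       \<and> (\<forall>N N'. row_kernel (CARD('n) - k) N = V \<longrightarrow> row_kernel (CARD('n) - k) N' = V \<longrightarrow>
            (\<exists>c::real. c \<noteq> 0 \<and>
               (\<forall>G. G face_of Q \<and> aff_dim G = int CARD('n) - int k - 1 \<longrightarrow>
                  chow_form (CARD('n) - k) (verts G) N' = c * chow_form (CARD('n) - k) (verts G) N)))"
proof -
  let ?m = "CARD('n) - k"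
  obtain a b where b: "b \<noteq> 0" and Qh: "Q \<subseteq> {x. a \<bullet> x = b}" using hyp by blast
  have "int (dim Q) = aff_dim Q + 1" by (rule dim_hyp[OF Qh b])
  hence dimQ: "dim Q = CARD('n)" using full by simp
  hence spanQ: "span Q = UNIV" using dim_eq_full[of Q] by simp
  have QQ: "Q face_of Q" using poly by (simp add: face_of_refl polytope_imp_convex)
  have P1: "\<exists>G. G face_of Q \<and> aff_dim G = int CARD('n) - int k - 1 \<and> chow_form ?m (verts G) N \<noteq> 0"
    if N: "row_kernel ?m N = V" for N
  proof -
    obtain G where G: "G face_of Q" "dim G = dim Q - k" "V \<inter> span G \<subseteq> {0}"
      using face_avoid_ind[OF poly Qh b QQ V(1) _ V(2)] spanQ dimQ kn by auto
    have Gh: "G \<subseteq> {x. a \<bullet> x = b}" using face_of_imp_subset[OF G(1)] Qh by blast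
    have "int (dim G) = aff_dim G + 1" by (rule dim_hyp[OF Gh b])
    hence adG: "aff_dim G = int CARD('n) - int k - 1" using G(2) dimQ kn by simp
    have vG: "(\<forall>i < ?m. verts G i extreme_point_of G) \<and> inj_on (verts G) {..<?m}
        \<and> independent (verts G ` {..<?m})" by (rule verts[OF G(1) adG])
    have "verts G ` {..<?m} \<subseteq> G" using vG by (auto simp: extreme_point_of_def)
    hence "span (verts G ` {..<?m}) \<subseteq> span G" by (rule span_mono)
    hence "span (verts G ` {..<?m}) \<inter> row_kernel ?m N \<subseteq> {0}" using G(3) N by blast
    hence "chow_form ?m (verts G) N \<noteq> 0" using chow_nonzero vG by blast
    thus ?thesis using G(1) adG by blast
  qed
  have P2: "\<exists>c::real. c \<noteq> 0 \<and>
               (\<forall>G. G face_of Q \<and> aff_dim G = int CARD('n) - int k - 1 \<longrightarrow>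
                  chow_form ?m (verts G) N' = c * chow_form ?m (verts G) N)"
    if N: "row_kernel ?m N = V" and N': "row_kernel ?m N' = V" for N N'
  proof -
    have "\<forall>j. \<exists>c. j < ?m \<longrightarrow> N' j = (\<Sum>l<?m. c l *\<^sub>R N l)"
      using row_span[of ?m N' N] N N' by auto
    then obtain A where A: "\<And>j. j < ?m \<Longrightarrow> N' j = (\<Sum>l<?m. A j l *\<^sub>R N l)" by metis
    have sc: "chow_form ?m M N' = det_nat ?m A * chow_form ?m M N" for M
      by (rule chow_scale) (rule A)
    obtain G0 where "chow_form ?m (verts G0) N' \<noteq> 0" using P1[OF N'] by blast
    hence "det_nat ?m A \<noteq> 0" using sc by auto
    thus ?thesis using sc by blast
  qed
  show ?thesis using P1 P2 by blast
qed

end
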